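(* For a liner $X$ with $|X|>2$ the following are equivalent: (1) $X$ is Playfair; (2) $X$ is affine, $3$-regular and $3$-long; (3) for every line $L\subseteq X$ and point $x\in X\setminus L$ there exists a unique line $\Lambda$ such that $x\in\Lambda\subseteq\overline{L\cup\{x\}}\setminus L$.
   Context: A liner is a set $X$ of points with a family of subsets called lines such that any two distinct points lie in a unique line and every line contains at least two points. For distinct $x,y$, $\overline{xy}$ is the line through them and $\overline{xx}:=\{x\}$. A set is flat if it contains $\overline{xy}$ for all its distinct points; $\overline A$ is the smallest flat containing $A$; the rank $\|A\|$ is the smallest cardinality of $B\subseteq X$ with $A\subseteq\overline B$; a plane is a flat of rank 3. $X$ is Playfair if for every plane $P$, line $L\subseteq P$ and point $x\in P\setminus L$ there exists a unique line $\Lambda$ with $x\in\Lambda\subseteq P\setminus L$. $X$ is affine if for all $o,x,y\in X$ and $p\in\overline{xy}\setminus\overline{ox}$ there exists $u\in\overline{oy}$ such that for every $v\in\overline{oy}$: $u=v$ iff $\overline{vp}\cap\overline{ox}=\varnothing$. $X$ is $3$-regular if for every set $A\subseteq X$ with $|A|<3$ and points $o\in\overline A$, $p\in X\setminus\overline A$, we have $\overline{\{p\}\cup A}=\bigcup_{u\in\overline{op}}\bigcup_{a\in\overline A}\overline{ua}$. $X$ is $3$-long if every line has at least $3$ points. *)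

theory Defs
  imports "HOL-Library.Extended_Nat"
begin

definition liner :: "'a set \<Rightarrow> 'a set set \<Rightarrow> bool" where
  "liner X Ls \<longleftrightarrow>
     (\<forall>L\<in>Ls. L \<subseteq> X \<and> (\<exists>a b. a \<in> L \<and> b \<in> L \<and> a \<noteq> b)) \<and>
     (\<forall>x\<in>X. \<forall>y\<in>X. x \<noteq> y \<longrightarrow> (\<exists>!L. L \<in> Ls \<and> x \<in> L \<and> y \<in> L))"

definition line_through :: "'a set set \<Rightarrow> 'a \<Rightarrow> 'a \<Rightarrow> 'a set" where
  "line_through Ls x y = (if x = y then {x} else (THE L. L \<in> Ls \<and> x \<in> L \<and> y \<in> L))"

definition flat :: "'a set \<Rightarrow> 'a set set \<Rightarrow> 'a set \<Rightarrow> bool" where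
  "flat X Ls A \<longleftrightarrow> A \<subseteq> X \<and> (\<forall>x\<in>A. \<forall>y\<in>A. x \<noteq> y \<longrightarrow> line_through Ls x y \<subseteq> A)"

definition flat_hull :: "'a set \<Rightarrow> 'a set set \<Rightarrow> 'a set \<Rightarrow> 'a set" where
  "flat_hull X Ls A = \<Inter>{F. flat X Ls F \<and> A \<subseteq> F}"

definition rank :: "'a set \<Rightarrow> 'a set set \<Rightarrow> 'a set \<Rightarrow> enat" where
  "rank X Ls A =
     (if \<exists>B. B \<subseteq> X \<and> finite B \<and> A \<subseteq> flat_hull X Ls B
      then enat (LEAST n. \<exists>B. B \<subseteq> X \<and> finite B \<and> card B = n \<and> A \<subseteq> flat_hull X Ls B)
      else \<infinity>)"

definition plane :: "'a set \<Rightarrow> 'a set set \<Rightarrow> 'a set \<Rightarrow> bool" where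
  "plane X Ls P \<longleftrightarrow> flat X Ls P \<and> rank X Ls P = 3"

definition playfair :: "'a set \<Rightarrow> 'a set set \<Rightarrow> bool" where
  "playfair X Ls \<longleftrightarrow>
     (\<forall>P L x. plane X Ls P \<and> L \<in> Ls \<and> L \<subseteq> P \<and> x \<in> P - L \<longrightarrow>
        (\<exists>!\<Lambda>. \<Lambda> \<in> Ls \<and> x \<in> \<Lambda> \<and> \<Lambda> \<subseteq> P - L))"

definition affine_liner :: "'a set \<Rightarrow> 'a set set \<Rightarrow> bool" where
  "affine_liner X Ls \<longleftrightarrow>
     (\<forall>z\<in>X. \<forall>x\<in>X. \<forall>y\<in>X. \<forall>p \<in> line_through Ls x y - line_through Ls z x.
        \<exists>u\<in>line_through Ls z y. \<forall>v\<in>line_through Ls z y.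
          (u = v \<longleftrightarrow> line_through Ls v p \<inter> line_through Ls z x = {}))"

definition regular3 :: "'a set \<Rightarrow> 'a set set \<Rightarrow> bool" where
  "regular3 X Ls \<longleftrightarrow>
     (\<forall>A z p. A \<subseteq> X \<and> finite A \<and> card A < 3 \<and> z \<in> flat_hull X Ls A \<and>
        p \<in> X - flat_hull X Ls A \<longrightarrow>
        flat_hull X Ls (insert p A) =
          (\<Union>u\<in>line_through Ls z p. \<Union>a\<in>flat_hull X Ls A. line_through Ls u a))"

definition long3 :: "'a set set \<Rightarrow> bool" where
  "long3 Ls \<longleftrightarrow> (\<forall>L\<in>Ls. \<exists>a b c. a \<in> L \<and> b \<in> L \<and> c \<in> L \<and> a \<noteq> b \<and> a \<noteq> c \<and> b \<noteq> c)"

end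

theory Submission
  imports Defs
begin

lemma line_sym: "line_through Ls x y = line_through Ls y x"
proof -
  have "(\<lambda>L. L \<in> Ls \<and> x \<in> L \<and> y \<in> L) = (\<lambda>L. L \<in> Ls \<and> y \<in> L \<and> x \<in> L)" by auto
  then show ?thesis unfolding line_through_def by simp
qed

locale lin =
  fixes X :: "'a set" and Ls :: "'a set set"
  assumes LN: "liner X Ls"
begin

abbreviation ln where "ln x y \<equiv> line_through Ls x y"
abbreviation hl where "hl A \<equiv> flat_hull X Ls A"

lemma LN1: "\<forall>L\<in>Ls. L \<subseteq> X \<and> (\<exists>a b. a \<in> L \<and> b \<in> L \<and> a \<noteq> b)"
  using LN unfolding liner_def by (rule conjunct1)

lemma LN2: "\<forall>x\<in>X. \<forall>y\<in>X. x \<noteq> y \<longrightarrow> (\<exists>!L. L \<in> Ls \<and> x \<in> L \<and> y \<in> L)"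
  using LN unfolding liner_def by (rule conjunct2)

lemma L_sub: "L \<in> Ls \<Longrightarrow> L \<subseteq> X"
  using LN1 by simp

lemma L_two: "L \<in> Ls \<Longrightarrow> \<exists>a b. a \<in> L \<and> b \<in> L \<and> a \<noteq> b"
  using LN1 by simp

lemma L_ex1: "x \<in> X \<Longrightarrow> y \<in> X \<Longrightarrow> x \<noteq> y \<Longrightarrow> \<exists>!L. L \<in> Ls \<and> x \<in> L \<and> y \<in> L"
  using LN2 by simp

lemma line_in: assumes "x \<in> X" "y \<in> X" "x \<noteq> y"
  shows "ln x y \<in> Ls" "x \<in> ln x y" "y \<in> ln x y"
proof -
  have "ln x y \<in> Ls \<and> x \<in> ln x y \<and> y \<in> ln x y"
    unfolding line_through_def using assms theI'[OF L_ex1[OF assms]] by simp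
  then show "ln x y \<in> Ls" "x \<in> ln x y" "y \<in> ln x y" by auto
qed

lemma line_eq: assumes "L \<in> Ls" "x \<in> L" "y \<in> L" "x \<noteq> y" shows "ln x y = L"
proof -
  have xy: "x \<in> X" "y \<in> X" using assms L_sub by auto
  show ?thesis unfolding line_through_def using assms(4) apply simp
    apply (rule the1_equality[OF L_ex1[OF xy assms(4)]]) using assms by simp
qed

lemma mem_ln1: "x \<in> X \<Longrightarrow> y \<in> X \<Longrightarrow> x \<in> ln x y"
  apply (cases "x = y") apply (simp add: line_through_def) using line_in(2) by blast

lemma mem_ln2: "x \<in> X \<Longrightarrow> y \<in> X \<Longrightarrow> y \<in> ln x y"
  apply (cases "x = y") apply (simp add: line_through_def) using line_in(3) by blast

lemma ln_refl[simp]: "ln x x = {x}" by (simp add: line_through_def)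

lemma ln_sub: "x \<in> X \<Longrightarrow> y \<in> X \<Longrightarrow> ln x y \<subseteq> X"
  apply (cases "x = y") apply (simp add: line_through_def) using line_in(1) L_sub by blast

lemma ln_eq2: assumes "x \<in> X" "y \<in> X" "u \<in> ln x y" "v \<in> ln x y" "u \<noteq> v"
  shows "ln u v = ln x y"
proof (cases "x = y")
  case True then show ?thesis using assms by simp
next
  case False
  have "ln x y \<in> Ls" using line_in[OF assms(1,2) False] by simp
  then show ?thesis using assms line_eq by blast
qed

lemma two_lines: assumes "L \<in> Ls" "M \<in> Ls" "u \<in> L" "v \<in> L" "u \<in> M" "v \<in> M" "u \<noteq> v"
  shows "L = M"
  using line_eq[OF assms(1,3,4,7)] line_eq[OF assms(2,5,6,7)] by simp

lemma flat_line: assumes "x \<in> X" "y \<in> X" shows "flat X Ls (ln x y)"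
  unfolding flat_def using ln_sub[OF assms] ln_eq2[OF assms] by auto

lemma flat_L: "L \<in> Ls \<Longrightarrow> flat X Ls L"
  unfolding flat_def using L_sub line_eq by fastforce

lemma flat_ln_sub: "flat X Ls F \<Longrightarrow> u \<in> F \<Longrightarrow> v \<in> F \<Longrightarrow> ln u v \<subseteq> F"
  unfolding flat_def by (cases "u = v") auto

lemma flat_X: "flat X Ls X"
  unfolding flat_def using ln_sub by auto

lemma hull_flat: assumes "A \<subseteq> X" shows "flat X Ls (hl A)"
proof -
  have "\<Inter> {F. flat X Ls F \<and> A \<subseteq> F} \<subseteq> X" using flat_X assms by blast
  moreover have "\<forall>x\<in>\<Inter> {F. flat X Ls F \<and> A \<subseteq> F}. \<forall>y\<in>\<Inter> {F. flat X Ls F \<and> A \<subseteq> F}. x \<noteq> y \<longrightarrow> ln x y \<subseteq> \<Inter> {F. flat X Ls F \<and> A \<subseteq> F}"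
    unfolding flat_def by blast
  ultimately show ?thesis unfolding flat_def flat_hull_def by blast
qed

lemma hull_sup: "A \<subseteq> hl A"
  unfolding flat_hull_def by blast

lemma hull_min: "flat X Ls F \<Longrightarrow> A \<subseteq> F \<Longrightarrow> hl A \<subseteq> F"
  unfolding flat_hull_def by blast

lemma hull_X: "A \<subseteq> X \<Longrightarrow> hl A \<subseteq> X"
  using hull_min[OF flat_X] by blast

lemma hull_mono: "A \<subseteq> B \<Longrightarrow> B \<subseteq> X \<Longrightarrow> hl A \<subseteq> hl B"
  using hull_min[OF hull_flat, of B A] hull_sup[of B] by blast

lemma hull_empty: "hl {} = {}"
  using hull_min[of "{}" "{}"] unfolding flat_def by auto

lemma hull_pair: assumes "x \<in> X" "y \<in> X" shows "hl {x,y} = ln x y"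
proof
  show "hl {x,y} \<subseteq> ln x y" using hull_min[OF flat_line[OF assms]] mem_ln1 mem_ln2 assms by auto
  show "ln x y \<subseteq> hl {x,y}" using flat_ln_sub[OF hull_flat, of "{x,y}" x y] hull_sup[of "{x,y}"] assms by auto
qed

lemma hull_single: "x \<in> X \<Longrightarrow> hl {x} = {x}"
  using hull_pair[of x x] by simp

lemma hull_line_pt: assumes "a \<in> X" "b \<in> X" "x \<in> X"
  shows "hl (ln a b \<union> {x}) = hl {a,b,x}"
proof
  have s: "{a,b,x} \<subseteq> X" using assms by auto
  have "ln a b \<subseteq> hl {a,b,x}" using flat_ln_sub[OF hull_flat[OF s]] hull_sup[of "{a,b,x}"] by auto
  then show "hl (ln a b \<union> {x}) \<subseteq> hl {a,b,x}" using hull_min[OF hull_flat[OF s]] hull_sup[of "{a,b,x}"] by auto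
  have "{a,b,x} \<subseteq> ln a b \<union> {x}" using mem_ln1 mem_ln2 assms by auto
  moreover have "ln a b \<union> {x} \<subseteq> X" using ln_sub assms by auto
  ultimately show "hl {a,b,x} \<subseteq> hl (ln a b \<union> {x})" by (rule hull_mono)
qed

end

context lin begin

definition ncol where "ncol a b c \<longleftrightarrow> a \<in> X \<and> b \<in> X \<and> c \<in> X \<and> a \<noteq> b \<and> c \<notin> ln a b"

lemma ln_cap: assumes "a \<in> X" "b \<in> X" "c \<in> X" "a \<noteq> b" "c \<notin> ln a b" "x \<in> ln a b" "x \<in> ln a c"
  shows "x = a"
proof (rule ccontr)
  assume "x \<noteq> a"
  have "a \<noteq> c" using assms mem_ln1 by blast
  have "ln a x = ln a b" using ln_eq2[OF assms(1,2) mem_ln1[OF assms(1,2)] assms(6)] \<open>x \<noteq> a\<close> by simp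
  moreover have "ln a x = ln a c" using ln_eq2[OF assms(1,3) mem_ln1[OF assms(1,3)] assms(7)] \<open>x \<noteq> a\<close> by simp
  ultimately show False using assms(5) mem_ln2[OF assms(1,3)] by simp
qed

lemma ncol_21: "ncol a b c \<Longrightarrow> ncol b a c"
  unfolding ncol_def using line_sym[of Ls a b] by auto

lemma ncol_13: assumes "ncol a b c" shows "ncol a c b"
proof -
  have *: "a \<in> X" "b \<in> X" "c \<in> X" "a \<noteq> b" "c \<notin> ln a b" using assms unfolding ncol_def by auto
  have "a \<noteq> c" using * mem_ln1 by blast
  moreover have "b \<notin> ln a c"
  proof
    assume "b \<in> ln a c"
    then have "ln a b = ln a c" using ln_eq2[OF *(1,3) mem_ln1[OF *(1,3)]] *(4) by simp
    then show False using *(5) mem_ln2[OF *(1,3)] by simp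
  qed
  ultimately show ?thesis using * unfolding ncol_def by simp
qed

lemma ncol_perm: assumes "ncol a b c"
  shows "ncol b a c" "ncol a c b" "ncol b c a" "ncol c a b" "ncol c b a"
proof -
  show 1: "ncol b a c" using ncol_21[OF assms] .
  show 2: "ncol a c b" using ncol_13[OF assms] .
  show 3: "ncol b c a" using ncol_13[OF 1] .
  show 4: "ncol c a b" using ncol_21[OF 2] .
  show 5: "ncol c b a" using ncol_21[OF 3] .
qed

lemma ncol_X: "ncol a b c \<Longrightarrow> a \<in> X \<and> b \<in> X \<and> c \<in> X"
  unfolding ncol_def by simp

lemma ncol_ne: assumes "ncol a b c" shows "a \<noteq> b \<and> a \<noteq> c \<and> b \<noteq> c"
  using ncol_perm(2,3)[OF assms] assms unfolding ncol_def by simp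

lemma ncol_out: "ncol a b c \<Longrightarrow> c \<notin> ln a b"
  unfolding ncol_def by simp

lemma ncol_I: "a \<in> X \<Longrightarrow> b \<in> X \<Longrightarrow> c \<in> X \<Longrightarrow> a \<noteq> b \<Longrightarrow> c \<notin> ln a b \<Longrightarrow> ncol a b c"
  unfolding ncol_def by simp

lemma tri_sub: "ncol a b c \<Longrightarrow> {a,b,c} \<subseteq> X"
  unfolding ncol_def by simp

lemma tri_flat: "ncol a b c \<Longrightarrow> flat X Ls (hl {a,b,c})"
  by (rule hull_flat, rule tri_sub)

lemma tri_mem: "a \<in> hl {a,b,c}" "b \<in> hl {a,b,c}" "c \<in> hl {a,b,c}"
  using hull_sup[of "{a,b,c}"] by auto

lemma tri_X: "ncol a b c \<Longrightarrow> hl {a,b,c} \<subseteq> X"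
  by (rule hull_X, rule tri_sub)

lemma tri_ln: "ncol a b c \<Longrightarrow> u \<in> hl {a,b,c} \<Longrightarrow> v \<in> hl {a,b,c} \<Longrightarrow> ln u v \<subseteq> hl {a,b,c}"
  by (rule flat_ln_sub, rule tri_flat)

lemma tri_sub_min: "ncol a b c \<Longrightarrow> {p,q,r} \<subseteq> hl {a,b,c} \<Longrightarrow> hl {p,q,r} \<subseteq> hl {a,b,c}"
  by (rule hull_min, rule tri_flat)

lemma tri_comm: "hl {a,b,c} = hl {b,a,c}" "hl {a,b,c} = hl {a,c,b}" "hl {a,b,c} = hl {b,c,a}"
  "hl {a,b,c} = hl {c,a,b}" "hl {a,b,c} = hl {c,b,a}"
  by (simp_all add: insert_commute)

lemma reg_decomp: assumes R: "regular3 X Ls" and nc: "ncol a b c" and z: "z \<in> ln a b"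
  and y: "y \<in> hl {a,b,c}"
  shows "\<exists>u \<in> ln z c. \<exists>w \<in> ln a b. y \<in> ln u w"
proof -
  have X: "a \<in> X" "b \<in> X" "c \<in> X" "a \<noteq> b" "c \<notin> ln a b" using nc unfolding ncol_def by auto
  have h2: "hl {a,b} = ln a b" using hull_pair X by simp
  have A: "{a,b} \<subseteq> X \<and> finite {a,b} \<and> card {a,b} < 3 \<and> z \<in> hl {a,b} \<and> c \<in> X - hl {a,b}"
    using X h2 z by simp
  have "hl (insert c {a,b}) = (\<Union>u\<in>ln z c. \<Union>w\<in>hl {a,b}. ln u w)"
    using R A unfolding regular3_def by (elim allE[of _ "{a,b}"] allE[of _ z] allE[of _ c]) (erule mp)
  moreover have "insert c {a,b} = {a,b,c}" by auto
  ultimately show ?thesis using y h2 by auto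
qed

lemma exch_reg: assumes R: "regular3 X Ls" and nc: "ncol a b c" and d: "d \<in> hl {a,b,c}" "d \<notin> ln a b"
  shows "hl {a,b,d} = hl {a,b,c}"
proof -
  have X: "a \<in> X" "b \<in> X" "c \<in> X" "a \<noteq> b" "c \<notin> ln a b" using nc unfolding ncol_def by auto
  have dX: "d \<in> X" using d tri_X nc by blast
  have ncd: "ncol a b d" using X dX d ncol_I by blast
  have sub1: "hl {a,b,d} \<subseteq> hl {a,b,c}" using tri_sub_min[OF nc] d tri_mem by blast
  obtain u w where u: "u \<in> ln a c" and w: "w \<in> ln a b" and duw: "d \<in> ln u w"
    using reg_decomp[OF R nc mem_ln1[OF X(1,2)] d(1)] by blast
  have uX: "u \<in> X" using u ln_sub X by blast
  have wX: "w \<in> X" using w ln_sub X by blast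
  have uw: "u \<noteq> w" using duw w d(2) by auto
  have dw: "d \<noteq> w" using w d(2) by auto
  have ua: "u \<noteq> a"
  proof
    assume "u = a"
    then have "d \<in> ln a w" using duw by simp
    moreover have "ln a w \<subseteq> ln a b" using flat_ln_sub[OF flat_line[OF X(1,2)] mem_ln1[OF X(1,2)] w] .
    ultimately show False using d(2) by blast
  qed
  let ?Q = "hl {a,b,d}"
  have wQ: "w \<in> ?Q" using tri_ln[OF ncd, of a b] tri_mem w by blast
  have dQ: "d \<in> ?Q" using tri_mem by blast
  have "ln d w = ln u w" using ln_eq2[OF uX wX duw mem_ln2[OF uX wX] dw] .
  then have "u \<in> ?Q" using tri_ln[OF ncd dQ wQ] mem_ln1[OF uX wX] by auto
  then have "ln a u \<subseteq> ?Q" using tri_ln[OF ncd] tri_mem by blast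
  moreover have "ln a u = ln a c" using ln_eq2[OF X(1,3) mem_ln1[OF X(1,3)] u] ua[symmetric] by simp
  ultimately have "c \<in> ?Q" using mem_ln2[OF X(1,3)] by auto
  then have "hl {a,b,c} \<subseteq> ?Q" using tri_sub_min[OF ncd] tri_mem by blast
  then show ?thesis using sub1 by blast
qed

end

lemma ex1_obt: assumes "\<exists>!x. P x" obtains x where "P x" "\<And>y. P y \<Longrightarrow> y = x"
  using assms by blast

context lin begin

definition T3 where "T3 \<longleftrightarrow> (\<forall>a b c. ncol a b c \<longrightarrow> (\<exists>!\<Lambda>. \<Lambda> \<in> Ls \<and> c \<in> \<Lambda> \<and> \<Lambda> \<subseteq> hl {a,b,c} - ln a b))"
definition EXC where "EXC \<longleftrightarrow> (\<forall>a b c d. ncol a b c \<longrightarrow> d \<in> hl {a,b,c} \<longrightarrow> d \<notin> ln a b \<longrightarrow> hl {a,b,d} = hl {a,b,c})"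
definition PF where "PF \<longleftrightarrow> (\<forall>a b c L x. ncol a b c \<and> L \<in> Ls \<and> L \<subseteq> hl {a,b,c} \<and> x \<in> hl {a,b,c} - L \<longrightarrow>
   (\<exists>!\<Lambda>. \<Lambda> \<in> Ls \<and> x \<in> \<Lambda> \<and> \<Lambda> \<subseteq> hl {a,b,c} - L))"

lemma EXC_reg: "regular3 X Ls \<Longrightarrow> EXC"
  unfolding EXC_def using exch_reg by (intro allI impI)

lemma T3D: assumes "T3" "ncol a b c"
  shows "\<exists>\<Lambda>. \<Lambda> \<in> Ls \<and> c \<in> \<Lambda> \<and> \<Lambda> \<subseteq> hl {a,b,c} - ln a b \<and>
    (\<forall>M. M \<in> Ls \<and> c \<in> M \<and> M \<subseteq> hl {a,b,c} - ln a b \<longrightarrow> M = \<Lambda>)"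
  using assms(1)[unfolded T3_def, rule_format, OF assms(2)] by (rule ex1E) blast

lemma exch_T3: assumes T: "T3" and nc: "ncol a b c" and d: "d \<in> hl {a,b,c}" "d \<notin> ln a b"
  shows "hl {a,b,d} = hl {a,b,c}"
proof -
  have X: "a \<in> X" "b \<in> X" "c \<in> X" "a \<noteq> b" "c \<notin> ln a b" using nc unfolding ncol_def by auto
  have dX: "d \<in> X" using d tri_X nc by blast
  have ncd: "ncol a b d" using X dX d ncol_I by blast
  let ?H = "hl {a,b,c}" and ?Q = "hl {a,b,d}" and ?L = "ln a b"
  have sub1: "?Q \<subseteq> ?H" using tri_sub_min[OF nc] d tri_mem by blast
  have LQ: "?L \<subseteq> ?Q" using tri_ln[OF ncd] tri_mem by blast
  have HX: "?H \<subseteq> X" using tri_X[OF nc] .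
  have claim: "c \<in> ?Q" if y: "y \<in> ?Q" "y \<notin> ?L" "y \<noteq> c" and w: "w \<in> ?L" "w \<in> ln c y" for y w
  proof -
    have yX: "y \<in> X" using y sub1 HX by blast
    have "y \<noteq> w" using y w by blast
    then have "ln y w = ln c y" using ln_eq2[OF X(3) yX mem_ln2[OF X(3) yX] w(2)] by simp
    moreover have "ln y w \<subseteq> ?Q" using tri_ln[OF ncd y(1)] w LQ by blast
    ultimately show ?thesis using mem_ln1[OF X(3) yX] by blast
  qed
  have cQ: "c \<in> ?Q"
  proof (cases "c = d")
    case True then show ?thesis using tri_mem by simp
  next
    case cd: False
    obtain \<Lambda> where \<Lambda>: "\<Lambda> \<in> Ls" "c \<in> \<Lambda>" "\<Lambda> \<subseteq> ?H - ?L"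
      and \<Lambda>u0: "\<forall>M. M \<in> Ls \<and> c \<in> M \<and> M \<subseteq> ?H - ?L \<longrightarrow> M = \<Lambda>"
      using T3D[OF T nc] by (elim exE conjE)
    have \<Lambda>u: "\<And>M. M \<in> Ls \<Longrightarrow> c \<in> M \<Longrightarrow> M \<subseteq> ?H - ?L \<Longrightarrow> M = \<Lambda>" using \<Lambda>u0 by blast
    show ?thesis
    proof (cases "ln c d \<inter> ?L = {}")
      case False
      then obtain w where "w \<in> ?L" "w \<in> ln c d" by blast
      then show ?thesis using claim[of d w] tri_mem d(2) cd by blast
    next
      case True
      have "ln c d \<subseteq> ?H" using tri_ln[OF nc] tri_mem d(1) by blast
      then have cdL: "ln c d = \<Lambda>" using \<Lambda>u[of "ln c d"] line_in[OF X(3) dX cd] True by blast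
      obtain \<Lambda>' where \<Lambda>': "\<Lambda>' \<in> Ls" "d \<in> \<Lambda>'" "\<Lambda>' \<subseteq> ?Q - ?L"
        using T3D[OF T ncd] by (elim exE conjE)
      obtain y where y: "y \<in> \<Lambda>'" "y \<noteq> d" using L_two[OF \<Lambda>'(1)] by blast
      have yQ: "y \<in> ?Q" "y \<notin> ?L" using y \<Lambda>' by auto
      have yX: "y \<in> X" using yQ sub1 HX by blast
      show ?thesis
      proof (cases "y = c")
        case True then show ?thesis using yQ by simp
      next
        case yc: False
        show ?thesis
        proof (cases "ln c y \<inter> ?L = {}")
          case False
          then obtain w where "w \<in> ?L" "w \<in> ln c y" by blast
          then show ?thesis using claim[of y w] yQ yc by blast
        next
          case True
          have "ln c y \<subseteq> ?H" using tri_ln[OF nc] tri_mem yQ sub1 by blast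
          then have "ln c y = \<Lambda>" using \<Lambda>u[of "ln c y"] line_in[OF X(3) yX] yc True by blast
          then have "y \<in> ln c d" using cdL mem_ln2[OF X(3) yX] by simp
          then have "ln y d = ln c d" using ln_eq2[OF X(3) dX _ mem_ln2[OF X(3) dX]] y(2) by simp
          moreover have "ln y d = \<Lambda>'" using line_eq[OF \<Lambda>'(1) y(1) \<Lambda>'(2) y(2)] .
          ultimately have "c \<in> \<Lambda>'" using mem_ln1[OF X(3) dX] by simp
          then show ?thesis using \<Lambda>' by blast
        qed
      qed
    qed
  qed
  then have "?H \<subseteq> ?Q" using tri_sub_min[OF ncd] tri_mem by blast
  then show ?thesis using sub1 by blast
qed

lemma EXC_T3: "T3 \<Longrightarrow> EXC"
  unfolding EXC_def using exch_T3 by (intro allI impI)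

lemma EXCD: "EXC \<Longrightarrow> ncol a b c \<Longrightarrow> d \<in> hl {a,b,c} \<Longrightarrow> d \<notin> ln a b \<Longrightarrow> hl {a,b,d} = hl {a,b,c}"
  unfolding EXC_def by (rule_tac mp[OF mp[OF mp]], (erule allE)+)

lemma X2: assumes E: EXC and nc: "ncol a b c" and p: "p \<in> hl {a,b,c}"
  shows "\<exists>b' c'. ncol p b' c' \<and> hl {p,b',c'} = hl {a,b,c}"
proof -
  have X: "a \<in> X" "b \<in> X" "c \<in> X" "a \<noteq> b" "c \<notin> ln a b" using nc unfolding ncol_def by auto
  have pX: "p \<in> X" using p tri_X nc by blast
  show ?thesis
  proof (cases "p \<in> ln b c")
    case False
    have n2: "ncol b c a" using ncol_perm[OF nc] by simp
    have "hl {b,c,p} = hl {b,c,a}" using EXCD[OF E n2 _ False] p tri_comm by simp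
    moreover have "ncol p b c" using ncol_perm(4)[OF ncol_I[OF X(2,3) pX _ False]] ncol_ne[OF nc] by simp
    ultimately show ?thesis by (intro exI[of _ b] exI[of _ c]) (simp add: insert_commute)
  next
    case True
    show ?thesis
    proof (cases "p = b")
      case True
      then show ?thesis using ncol_perm(1)[OF nc] by (intro exI[of _ a] exI[of _ c]) (simp add: insert_commute)
    next
      case False
      have "p \<notin> ln a b"
      proof
        assume "p \<in> ln a b"
        then have "p \<in> ln b a" using line_sym[of Ls a b] by simp
        then show False using ln_cap[OF X(2,1,3) X(4)[symmetric] _ _ True] ncol_out[OF ncol_perm(1)[OF nc]] False by blast
      qed
      then have "hl {a,b,p} = hl {a,b,c}" using EXCD[OF E nc p] by simp
      moreover have "ncol p a b" using ncol_perm(4)[OF ncol_I[OF X(1,2) pX X(4) \<open>p \<notin> ln a b\<close>]] .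
      ultimately show ?thesis by (intro exI[of _ a] exI[of _ b]) (simp add: insert_commute)
    qed
  qed
qed

lemma X3: assumes E: EXC and nc: "ncol p b c" and q: "q \<in> hl {p,b,c}" "q \<noteq> p"
  shows "\<exists>c'. ncol p q c' \<and> hl {p,q,c'} = hl {p,b,c}"
proof -
  have X: "p \<in> X" "b \<in> X" "c \<in> X" "p \<noteq> b" "c \<notin> ln p b" using nc unfolding ncol_def by auto
  have qX: "q \<in> X" using q tri_X nc by blast
  show ?thesis
  proof (cases "q \<in> ln p c")
    case False
    have n2: "ncol p c b" using ncol_perm[OF nc] by simp
    have "hl {p,c,q} = hl {p,c,b}" using EXCD[OF E n2 _ False] q tri_comm by simp
    moreover have "ncol p q c" using ncol_perm(2)[OF ncol_I[OF X(1,3) qX _ False]] ncol_ne[OF nc] by simp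
    ultimately show ?thesis by (intro exI[of _ c]) (simp add: insert_commute)
  next
    case True
    have "q \<notin> ln p b" using ln_cap[OF X] True q(2) by blast
    then have "hl {p,b,q} = hl {p,b,c}" using EXCD[OF E nc q(1)] by simp
    moreover have "ncol p q b" using ncol_perm(2)[OF ncol_I[OF X(1,2) qX X(4) \<open>q \<notin> ln p b\<close>]] .
    ultimately show ?thesis by (intro exI[of _ b]) (simp add: insert_commute)
  qed
qed

lemma fullx: assumes E: EXC and nc: "ncol a b c" and np: "ncol p q r"
  and s: "p \<in> hl {a,b,c}" "q \<in> hl {a,b,c}" "r \<in> hl {a,b,c}"
  shows "hl {p,q,r} = hl {a,b,c}"
proof -
  obtain b' c' where 1: "ncol p b' c'" "hl {p,b',c'} = hl {a,b,c}" using X2[OF E nc s(1)] by blast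
  obtain c'' where 2: "ncol p q c''" "hl {p,q,c''} = hl {p,b',c'}"
    using X3[OF E 1(1), of q] s(2) 1(2) ncol_ne[OF np] by auto
  have "hl {p,q,r} = hl {p,q,c''}" using EXCD[OF E 2(1), of r] s(3) 1(2) 2(2) ncol_out[OF np] by simp
  then show ?thesis using 1 2 by simp
qed

lemma PF_T3: assumes T: T3 shows PF
  unfolding PF_def
proof (intro allI impI)
  fix a b c L x
  assume A: "ncol a b c \<and> L \<in> Ls \<and> L \<subseteq> hl {a,b,c} \<and> x \<in> hl {a,b,c} - L"
  have E: EXC using EXC_T3[OF T] .
  obtain l1 l2 where l: "l1 \<in> L" "l2 \<in> L" "l1 \<noteq> l2" using L_two A by blast
  have LX: "L \<subseteq> X" using L_sub A by blast
  have Leq: "ln l1 l2 = L" using line_eq A l by blast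
  have xX: "x \<in> X" using A tri_X by blast
  have n: "ncol l1 l2 x" using ncol_I[of l1 l2 x] l LX xX Leq A by blast
  have "hl {l1,l2,x} = hl {a,b,c}" using fullx[OF E _ n] A l by blast
  moreover have "\<exists>!\<Lambda>. \<Lambda> \<in> Ls \<and> x \<in> \<Lambda> \<and> \<Lambda> \<subseteq> hl {l1,l2,x} - ln l1 l2"
    using T[unfolded T3_def, rule_format, OF n] .
  ultimately show "\<exists>!\<Lambda>. \<Lambda> \<in> Ls \<and> x \<in> \<Lambda> \<and> \<Lambda> \<subseteq> hl {a,b,c} - L"
    using Leq by simp
qed

lemma PFD: assumes "PF" "ncol a b c" "L \<in> Ls" "L \<subseteq> hl {a,b,c}" "x \<in> hl {a,b,c}" "x \<notin> L"
  shows "\<exists>\<Lambda>. \<Lambda> \<in> Ls \<and> x \<in> \<Lambda> \<and> \<Lambda> \<subseteq> hl {a,b,c} - L \<and>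
    (\<forall>M. M \<in> Ls \<and> x \<in> M \<and> M \<subseteq> hl {a,b,c} - L \<longrightarrow> M = \<Lambda>)"
proof -
  have "\<exists>!\<Lambda>. \<Lambda> \<in> Ls \<and> x \<in> \<Lambda> \<and> \<Lambda> \<subseteq> hl {a,b,c} - L"
    using assms(1)[unfolded PF_def, rule_format, of a b c L x] assms(2-6) by blast
  then show ?thesis by (rule ex1E) blast
qed

lemma PF_uniq: assumes "PF" "ncol a b c" "L \<in> Ls" "L \<subseteq> hl {a,b,c}" "x \<notin> L"
  "M1 \<in> Ls" "x \<in> M1" "M1 \<subseteq> hl {a,b,c}" "M1 \<inter> L = {}"
  "M2 \<in> Ls" "x \<in> M2" "M2 \<subseteq> hl {a,b,c}" "M2 \<inter> L = {}"
  shows "M1 = M2"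
proof -
  have xH: "x \<in> hl {a,b,c}" using assms by blast
  obtain \<Lambda> where "\<Lambda> \<in> Ls" "x \<in> \<Lambda>" "\<Lambda> \<subseteq> hl {a,b,c} - L"
     and u0: "\<forall>M. M \<in> Ls \<and> x \<in> M \<and> M \<subseteq> hl {a,b,c} - L \<longrightarrow> M = \<Lambda>"
    using PFD[OF assms(1-4) xH assms(5)] by (elim exE conjE)
  have u: "\<And>M. M \<in> Ls \<Longrightarrow> x \<in> M \<Longrightarrow> M \<subseteq> hl {a,b,c} - L \<Longrightarrow> M = \<Lambda>" using u0 by blast
  have "M1 = \<Lambda>" using u[OF assms(6,7)] assms(8,9) by blast
  moreover have "M2 = \<Lambda>" using u[OF assms(10,11)] assms(12,13) by blast
  ultimately show ?thesis by simp
qed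

end

context lin begin

lemma aff_one: assumes P: PF and X: "z \<in> X" "x \<in> X" "y \<in> X" and p: "p \<in> ln x y" "p \<notin> ln z x"
  shows "\<exists>u\<in>ln z y. \<forall>v\<in>ln z y. (u = v \<longleftrightarrow> ln v p \<inter> ln z x = {})"
proof (cases "z = x")
  case True
  then have pz: "p \<noteq> z" using p by simp
  have zy: "z \<noteq> y" using p True by auto
  have pN: "p \<in> ln z y" using p True by simp
  show ?thesis
  proof (rule bexI[OF _ pN], intro ballI)
    fix v assume v: "v \<in> ln z y"
    show "(p = v) = (ln v p \<inter> ln z x = {})"
    proof (cases "v = p")
      case True then show ?thesis using pz \<open>z = x\<close> by auto
    next
      case False
      have "ln v p = ln z y" using ln_eq2[OF X(1,3) v pN False] .
      then show ?thesis using False mem_ln1[OF X(1,3)] \<open>z = x\<close> by auto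
    qed
  qed
next
  case zx: False
  have xy: "x \<noteq> y" using p mem_ln2[OF X(1,2)] by auto
  have yK: "y \<notin> ln z x"
  proof
    assume "y \<in> ln z x"
    then have "ln x y = ln z x" using ln_eq2[OF X(1,2) mem_ln2[OF X(1,2)] _ xy] by simp
    then show False using p by simp
  qed
  have nc: "ncol z x y" using ncol_I[OF X zx yK] .
  let ?H = "hl {z,x,y}" and ?K = "ln z x" and ?N = "ln z y"
  have KH: "?K \<subseteq> ?H" using tri_ln[OF nc] tri_mem by blast
  have NH: "?N \<subseteq> ?H" using tri_ln[OF nc] tri_mem by blast
  have pH: "p \<in> ?H" using tri_ln[OF nc] tri_mem p(1) by blast
  have pX: "p \<in> X" using pH tri_X[OF nc] by blast
  have KL: "?K \<in> Ls" using line_in[OF X(1,2) zx] by simp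
  have NL: "?N \<in> Ls" using line_in[OF X(1,3)] ncol_ne[OF nc] by simp
  show ?thesis
  proof (cases "p = y")
    case True
    show ?thesis
    proof (rule bexI[OF _ mem_ln2[OF X(1,3)]], intro ballI)
      fix v assume v: "v \<in> ?N"
      show "(y = v) = (ln v p \<inter> ?K = {})"
      proof (cases "v = y")
        case True then show ?thesis using yK \<open>p = y\<close> by auto
      next
        case False
        have "ln v y = ?N" using ln_eq2[OF X(1,3) v mem_ln2[OF X(1,3)] False] .
        then show ?thesis using False mem_ln1[OF X(1,3)] mem_ln1[OF X(1,2)] \<open>p = y\<close> by auto
      qed
    qed
  next
    case py: False
    have pN: "p \<notin> ?N"
    proof
      assume pN: "p \<in> ?N"
      have "ln p y = ln x y" using ln_eq2[OF X(2,3) p(1) mem_ln2[OF X(2,3)] py] .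
      moreover have "ln p y = ?N" using ln_eq2[OF X(1,3) pN mem_ln2[OF X(1,3)] py] .
      ultimately have "x \<in> ?N" using mem_ln1[OF X(2,3)] by simp
      then show False using ncol_out[OF ncol_perm(2)[OF nc]] by simp
    qed
    obtain \<Lambda> where \<Lambda>: "\<Lambda> \<in> Ls" "p \<in> \<Lambda>" "\<Lambda> \<subseteq> ?H - ?K"
      using PFD[OF P nc KL KH pH p(2)] by (elim exE conjE)
    have zK: "z \<in> ?K" using mem_ln1[OF X(1,2)] .
    have "\<Lambda> \<inter> ?N \<noteq> {}"
    proof
      assume e: "\<Lambda> \<inter> ?N = {}"
      have zL: "z \<notin> \<Lambda>" using \<Lambda>(3) zK by blast
      have LH: "\<Lambda> \<subseteq> ?H" using \<Lambda>(3) by blast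
      have e1: "?K \<inter> \<Lambda> = {}" using \<Lambda>(3) by blast
      have e2: "?N \<inter> \<Lambda> = {}" using e by blast
      have "?K = ?N" by (rule PF_uniq[OF P nc \<Lambda>(1) LH zL KL zK KH e1 NL mem_ln1[OF X(1,3)] NH e2])
      then show False using yK mem_ln2[OF X(1,3)] by simp
    qed
    then obtain u where u: "u \<in> \<Lambda>" "u \<in> ?N" by blast
    have up: "u \<noteq> p" using u pN by blast
    have uX: "u \<in> X" using u ln_sub[OF X(1,3)] by blast
    have lup: "ln u p = \<Lambda>" using line_eq[OF \<Lambda>(1) u(1) \<Lambda>(2) up] .
    show ?thesis
    proof (rule bexI[OF _ u(2)], intro ballI iffI)
      fix v assume "v \<in> ?N" "u = v"
      then show "ln v p \<inter> ?K = {}" using lup \<Lambda>(3) by blast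
    next
      fix v assume v: "v \<in> ?N" and e: "ln v p \<inter> ?K = {}"
      have vX: "v \<in> X" using v ln_sub[OF X(1,3)] by blast
      have vp: "v \<noteq> p" using v pN by blast
      have vH: "v \<in> ?H" using v NH by blast
      have LH: "\<Lambda> \<subseteq> ?H" using \<Lambda>(3) by blast
      have e1: "\<Lambda> \<inter> ?K = {}" using \<Lambda>(3) by blast
      have "ln v p = \<Lambda>"
        by (rule PF_uniq[OF P nc KL KH p(2) line_in(1)[OF vX pX vp] mem_ln2[OF vX pX] tri_ln[OF nc vH pH] e
          \<Lambda>(1,2) LH e1])
      then have "v \<in> \<Lambda>" using mem_ln1[OF vX pX] by simp
      show "u = v"
      proof (rule ccontr)
        assume "u \<noteq> v"
        then have "\<Lambda> = ?N" using two_lines[OF \<Lambda>(1) NL u(1) \<open>v \<in> \<Lambda>\<close> u(2) v] by simp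
        then show False using \<Lambda>(2) pN by simp
      qed
    qed
  qed
qed

lemma PF_affine: assumes P: PF shows "affine_liner X Ls"
  unfolding affine_liner_def
proof (intro ballI)
  fix z x y p assume "z \<in> X" "x \<in> X" "y \<in> X" "p \<in> ln x y - ln z x"
  then show "\<exists>u\<in>ln z y. \<forall>v\<in>ln z y. (u = v) = (ln v p \<inter> ln z x = {})"
    using aff_one[OF P, of z x y p] by simp
qed

end

context lin begin

lemma long_aux: assumes P: PF and nc: "ncol a b c" and ab: "ln a b \<subseteq> {a,b}"
  shows "ln a c \<subseteq> {a,c}"
proof
  fix y assume yK: "y \<in> ln a c"
  have X: "a \<in> X" "b \<in> X" "c \<in> X" using ncol_X[OF nc] by auto
  have ne: "a \<noteq> b" "a \<noteq> c" "b \<noteq> c" using ncol_ne[OF nc] by auto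
  let ?H = "hl {a,b,c}" and ?L = "ln a b" and ?K = "ln a c"
  have LL: "?L \<in> Ls" using line_in[OF X(1,2) ne(1)] by simp
  have KL: "?K \<in> Ls" using line_in[OF X(1,3) ne(2)] by simp
  have LH: "?L \<subseteq> ?H" using tri_ln[OF nc] tri_mem by blast
  have KH: "?K \<subseteq> ?H" using tri_ln[OF nc] tri_mem by blast
  have HX: "?H \<subseteq> X" using tri_X[OF nc] .
  have bK: "b \<notin> ?K" using ncol_out[OF ncol_perm(2)[OF nc]] .
  have cL: "c \<notin> ?L" using ncol_out[OF nc] .
  have aK: "a \<in> ?K" "c \<in> ?K" using mem_ln1[OF X(1,3)] mem_ln2[OF X(1,3)] by auto
  have aL: "a \<in> ?L" "b \<in> ?L" using mem_ln1[OF X(1,2)] mem_ln2[OF X(1,2)] by auto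
  obtain M where M: "M \<in> Ls" "b \<in> M" "M \<subseteq> ?H - ?K"
    using PFD[OF P nc KL KH tri_mem(2) bK] by (elim exE conjE)
  obtain \<Lambda> where \<Lambda>: "\<Lambda> \<in> Ls" "c \<in> \<Lambda>" "\<Lambda> \<subseteq> ?H - ?L"
    using PFD[OF P nc LL LH tri_mem(3) cL] by (elim exE conjE)
  have \<Lambda>H: "\<Lambda> \<subseteq> ?H" and \<Lambda>e: "\<Lambda> \<inter> ?L = {}" using \<Lambda>(3) by auto
  obtain e where e: "e \<in> M" "e \<noteq> b"
  proof -
    obtain u v where "u \<in> M" "v \<in> M" "u \<noteq> v" using L_two[OF M(1)] by blast
    then show ?thesis using that by blast
  qed
  have eH: "e \<in> ?H" and eK: "e \<notin> ?K" using e M by auto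
  have eX: "e \<in> X" using eH HX by blast
  have ea: "e \<noteq> a" using eK aK by blast
  have eL: "e \<notin> ?L" using ab ea e(2) by blast
  have ec: "e \<noteq> c" using eK aK by blast
  have lbe: "ln b e = M" using line_eq[OF M(1) M(2) e(1) e(2)[symmetric]] .
  have e\<Lambda>: "e \<in> \<Lambda>"
  proof (cases "ln c e \<inter> ?L = {}")
    case True
    have "ln c e = \<Lambda>"
      by (rule PF_uniq[OF P nc LL LH cL line_in(1)[OF X(3) eX ec[symmetric]] mem_ln1[OF X(3) eX]
            tri_ln[OF nc tri_mem(3) eH] True \<Lambda>(1,2) \<Lambda>H \<Lambda>e])
    then show ?thesis using mem_ln2[OF X(3) eX] by simp
  next
    case False
    then obtain w where w: "w \<in> ln c e" "w \<in> ?L" by blast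
    then have "w = a \<or> w = b" using ab by blast
    then show ?thesis
    proof
      assume "w = a"
      then have "ln a c = ln c e" using ln_eq2[OF X(3) eX _ mem_ln1[OF X(3) eX] ne(2)] w by simp
      then show ?thesis using eK mem_ln2[OF X(3) eX] by simp
    next
      assume "w = b"
      then have "ln b e = ln c e" using ln_eq2[OF X(3) eX _ mem_ln2[OF X(3) eX] e(2)[symmetric]] w by simp
      then have "c \<in> M" using lbe mem_ln1[OF X(3) eX] by simp
      then show ?thesis using M(3) aK by blast
    qed
  qed
  show "y \<in> {a,c}"
  proof (rule ccontr)
    assume yac: "y \<notin> {a,c}"
    have yH: "y \<in> ?H" using yK KH by blast
    have yX: "y \<in> X" using yH HX by blast
    have ye: "y \<noteq> e" using yK eK by blast
    show False
    proof (cases "ln e y \<inter> ?L = {}")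
      case True
      have "ln e y = \<Lambda>"
        by (rule PF_uniq[OF P nc LL LH eL line_in(1)[OF eX yX ye[symmetric]] mem_ln1[OF eX yX]
            tri_ln[OF nc eH yH] True \<Lambda>(1) e\<Lambda> \<Lambda>H \<Lambda>e])
      then have "y \<in> \<Lambda>" using mem_ln2[OF eX yX] by simp
      then have "\<Lambda> = ?K" using two_lines[OF \<Lambda>(1) KL _ \<Lambda>(2) yK aK(2)] yac by blast
      then show False using \<Lambda>e aK(1) aL(1) by blast
    next
      case False
      then obtain w where w: "w \<in> ln e y" "w \<in> ?L" by blast
      then have "w = a \<or> w = b" using ab by blast
      then show False
      proof
        assume "w = a"
        then have "ln e y = ?K" using two_lines[OF line_in(1)[OF eX yX ye[symmetric]] KL _ mem_ln2[OF eX yX] _ yK] w aK yac by blast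
        then show False using eK mem_ln1[OF eX yX] by simp
      next
        assume "w = b"
        then have "ln b e = ln e y" using ln_eq2[OF eX yX _ mem_ln1[OF eX yX] e(2)[symmetric]] w by simp
        then have "y \<in> M" using lbe mem_ln2[OF eX yX] by simp
        then show False using M(3) yK by blast
      qed
    qed
  qed
qed

lemma three_pt: assumes "infinite X \<or> card X > 2" "a \<in> X" "b \<in> X" shows "\<exists>c\<in>X. c \<noteq> a \<and> c \<noteq> b"
proof (rule ccontr)
  assume "\<not> ?thesis"
  then have "X \<subseteq> {a,b}" by blast
  moreover have "card {a,b} \<le> 2" by (cases "a = b") auto
  ultimately have "finite X" "card X \<le> 2" using finite_subset card_mono[of "{a,b}" X] by auto
  then show False using assms(1) by simp
qed

lemma PF_long: assumes P: PF and big: "infinite X \<or> card X > 2" shows "long3 Ls"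
  unfolding long3_def
proof
  fix L assume LL: "L \<in> Ls"
  obtain a b where ab: "a \<in> L" "b \<in> L" "a \<noteq> b" using L_two[OF LL] by blast
  have X: "a \<in> X" "b \<in> X" using ab L_sub[OF LL] by auto
  have Leq: "ln a b = L" using line_eq[OF LL ab] .
  show "\<exists>a b c. a \<in> L \<and> b \<in> L \<and> c \<in> L \<and> a \<noteq> b \<and> a \<noteq> c \<and> b \<noteq> c"
  proof (rule ccontr)
    assume n3: "\<not> ?thesis"
    have Lab: "L \<subseteq> {a,b}" using n3 ab by blast
    obtain c where c: "c \<in> X" "c \<noteq> a" "c \<noteq> b" using three_pt[OF big X] by blast
    have cL: "c \<notin> ln a b" using Lab Leq c by blast
    have nc: "ncol a b c" using ncol_I[OF X c(1) ab(3) cL] .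
    have 1: "ln a c \<subseteq> {a,c}" using long_aux[OF P nc] Lab Leq by simp
    have "ln b a \<subseteq> {b,a}" using Lab Leq line_sym[of Ls a b] by auto
    then have 2: "ln b c \<subseteq> {b,c}" using long_aux[OF P ncol_perm(1)[OF nc]] by simp
    have fl: "flat X Ls {a,b,c}"
      unfolding flat_def
    proof (intro conjI ballI impI)
      show "{a,b,c} \<subseteq> X" using X c by simp
    next
      fix u v assume "u \<in> {a,b,c}" "v \<in> {a,b,c}" "u \<noteq> v"
      then show "ln u v \<subseteq> {a,b,c}"
        using 1 2 Lab Leq line_sym[of Ls a b] line_sym[of Ls a c] line_sym[of Ls b c] by auto
    qed
    have Hs: "hl {a,b,c} \<subseteq> {a,b,c}" using hull_min[OF fl] by simp
    obtain \<Lambda> where \<Lambda>: "\<Lambda> \<in> Ls" "c \<in> \<Lambda>" "\<Lambda> \<subseteq> hl {a,b,c} - ln a b"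
      using PFD[OF P nc line_in(1)[OF X ab(3)] tri_ln[OF nc tri_mem(1,2)] tri_mem(3) cL] by (elim exE conjE)
    have "\<Lambda> \<subseteq> {c}" using \<Lambda>(3) Hs mem_ln1[OF X] mem_ln2[OF X] by blast
    then show False using L_two[OF \<Lambda>(1)] by blast
  qed
qed

end

lemma card_lt3: assumes "finite A" "card A < 3"
  shows "A = {} \<or> (\<exists>a. A = {a}) \<or> (\<exists>a b. a \<noteq> b \<and> A = {a,b})"
proof -
  have "card A = 0 \<or> card A = 1 \<or> card A = 2" using assms(2) by linarith
  then show ?thesis
  proof (elim disjE)
    assume "card A = 0" then show ?thesis using assms(1) by simp
  next
    assume "card A = 1" then show ?thesis by (simp add: card_1_singleton_iff)
  next
    assume "card A = 2" then show ?thesis by (auto simp: card_2_iff)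
  qed
qed

context lin begin

lemma reg_sup: assumes A: "A \<subseteq> X" and z: "z \<in> hl A" and p: "p \<in> X"
  shows "(\<Union>u\<in>ln z p. \<Union>a\<in>hl A. ln u a) \<subseteq> hl (insert p A)"
proof -
  have iA: "insert p A \<subseteq> X" using A p by simp
  have F: "flat X Ls (hl (insert p A))" using hull_flat[OF iA] .
  have sub: "hl A \<subseteq> hl (insert p A)" using hull_mono[OF _ iA] by blast
  have pF: "p \<in> hl (insert p A)" using hull_sup by blast
  have zF: "z \<in> hl (insert p A)" using z sub by blast
  have "ln z p \<subseteq> hl (insert p A)" using flat_ln_sub[OF F zF pF] .
  then show ?thesis using flat_ln_sub[OF F] sub by blast
qed

lemma reg_one: assumes P: PF and Lg: "long3 Ls" and A: "A \<subseteq> X" "finite A" "card A < 3"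
  and z: "z \<in> hl A" and p: "p \<in> X" "p \<notin> hl A"
  shows "hl (insert p A) \<subseteq> (\<Union>u\<in>ln z p. \<Union>a\<in>hl A. ln u a)"
proof -
  have "A = {} \<or> (\<exists>a. A = {a}) \<or> (\<exists>a b. a \<noteq> b \<and> A = {a,b})" using card_lt3[OF A(2,3)] .
  then show ?thesis
  proof (elim disjE exE conjE)
    assume "A = {}" then show ?thesis using z hull_empty by simp
  next
    fix a assume Aa: "A = {a}"
    have aX: "a \<in> X" using A Aa by simp
    have za: "z = a" using z Aa hull_single[OF aX] by simp
    have zX: "z \<in> X" using za aX by simp
    have "hl (insert p A) = ln p a" using Aa hull_pair[OF p(1) aX] by simp
    also have "\<dots> = ln z p" using za line_sym[of Ls p a] by simp
    finally have e: "hl (insert p A) = ln z p" .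
    show ?thesis
    proof
      fix y assume "y \<in> hl (insert p A)"
      then have y: "y \<in> ln z p" using e by simp
      then have yX: "y \<in> X" using ln_sub[OF zX p(1)] za aX by blast
      have "y \<in> ln y a" using mem_ln1[OF yX aX] .
      then show "y \<in> (\<Union>u\<in>ln z p. \<Union>a\<in>hl A. ln u a)" using y Aa hull_single[OF aX] by blast
    qed
  next
    fix a b assume ab: "a \<noteq> b" and Aab: "A = {a,b}"
    have X: "a \<in> X" "b \<in> X" using A Aab by auto
    let ?L = "ln a b"
    have hA: "hl A = ?L" using Aab hull_pair[OF X] by simp
    have zL: "z \<in> ?L" using z hA by simp
    have pL: "p \<notin> ?L" using p hA by simp
    have nc: "ncol a b p" using ncol_I[OF X p(1) ab pL] .
    have zX: "z \<in> X" using zL ln_sub[OF X] by blast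
    have zp: "z \<noteq> p" using zL pL by blast
    have iA: "insert p A = {a,b,p}" using Aab by auto
    let ?H = "hl {a,b,p}" and ?K = "ln z p"
    have LL: "?L \<in> Ls" using line_in[OF X ab] by simp
    have KL: "?K \<in> Ls" using line_in[OF zX p(1) zp] by simp
    have LH: "?L \<subseteq> ?H" using tri_ln[OF nc] tri_mem by blast
    have zH: "z \<in> ?H" using zL LH by blast
    have KH: "?K \<subseteq> ?H" using tri_ln[OF nc zH tri_mem(3)] .
    have HX: "?H \<subseteq> X" using tri_X[OF nc] .
    have zK: "z \<in> ?K" "p \<in> ?K" using mem_ln1[OF zX p(1)] mem_ln2[OF zX p(1)] by auto
    show ?thesis unfolding iA hA
    proof
      fix y assume yH: "y \<in> ?H"
      have yX: "y \<in> X" using yH HX by blast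
      show "y \<in> (\<Union>u\<in>?K. \<Union>w\<in>?L. ln u w)"
      proof (cases "y \<in> ?L")
        case True
        then show ?thesis using zK mem_ln2[OF zX yX] by blast
      next
        case yL: False
        show ?thesis
        proof (cases "y = p")
          case True
          then show ?thesis using zK zL mem_ln1[OF p(1) zX] by blast
        next
          case yp: False
          show ?thesis
          proof (cases "ln p y \<inter> ?L = {}")
            case False
            then obtain w where w: "w \<in> ln p y" "w \<in> ?L" by blast
            have pw: "p \<noteq> w" using w pL by blast
            have "ln p w = ln p y" using ln_eq2[OF p(1) yX mem_ln1[OF p(1) yX] w(1) pw] .
            then have "y \<in> ln p w" using mem_ln2[OF p(1) yX] by simp
            then show ?thesis using zK w by blast
          next
            case e: True
            have yK: "y \<notin> ?K"
            proof
              assume "y \<in> ?K"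
              then have "?K = ln p y" using two_lines[OF KL line_in(1)[OF p(1) yX] zK(2) _ mem_ln1[OF p(1) yX] mem_ln2[OF p(1) yX]] yp by blast
              then show False using e zK zL by blast
            qed
            obtain q1 q2 q3 where q: "q1 \<in> ?L" "q2 \<in> ?L" "q3 \<in> ?L" "q1 \<noteq> q2" "q1 \<noteq> q3" "q2 \<noteq> q3"
              using Lg LL unfolding long3_def by blast
            obtain w1 w2 where w: "w1 \<in> ?L" "w2 \<in> ?L" "w1 \<noteq> w2" "w1 \<noteq> z" "w2 \<noteq> z"
            proof (cases "q1 = z")
              case True then show ?thesis using that[of q2 q3] q by blast
            next
              case False
              show ?thesis
              proof (cases "q2 = z")
                case True then show ?thesis using that[of q1 q3] q False by blast
              next
                case False2: False
                then show ?thesis using that[of q1 q2] q False by blast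
              qed
            qed
            have wX: "w1 \<in> X" "w2 \<in> X" using w ln_sub[OF X] by auto
            have wK: "w1 \<notin> ?K" "w2 \<notin> ?K"
            proof -
              have "?K \<noteq> ?L" using zK(2) pL by blast
              then show "w1 \<notin> ?K" "w2 \<notin> ?K" using two_lines[OF KL LL zK(1) _ zL] w by blast+
            qed
            have yw: "y \<noteq> w1" "y \<noteq> w2" using w yL by auto
            have wH: "w1 \<in> ?H" "w2 \<in> ?H" using w LH by auto
            have ex: "\<exists>i\<in>{w1,w2}. ln y i \<inter> ?K \<noteq> {}"
            proof (rule ccontr)
              assume "\<not> ?thesis"
              then have e1: "ln y w1 \<inter> ?K = {}" and e2: "ln y w2 \<inter> ?K = {}" by auto
              have "ln y w1 = ln y w2"
                by (rule PF_uniq[OF P nc KL KH yK line_in(1)[OF yX wX(1) yw(1)] mem_ln1[OF yX wX(1)]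
                   tri_ln[OF nc yH wH(1)] e1 line_in(1)[OF yX wX(2) yw(2)] mem_ln1[OF yX wX(2)]
                   tri_ln[OF nc yH wH(2)] e2])
              then have "w2 \<in> ln y w1" using mem_ln2[OF yX wX(2)] by simp
              then have "ln y w1 = ?L" using two_lines[OF line_in(1)[OF yX wX(1) yw(1)] LL mem_ln2[OF yX wX(1)] _ w(1) w(2) w(3)] by blast
              then show False using yL mem_ln1[OF yX wX(1)] by simp
            qed
            then obtain wi u where wi: "wi \<in> {w1,w2}" and u: "u \<in> ln y wi" "u \<in> ?K" by blast
            have wiL: "wi \<in> ?L" and wiX: "wi \<in> X" and ywi: "y \<noteq> wi" and wiK: "wi \<notin> ?K"
              using wi w wX yw wK by auto
            have uw: "u \<noteq> wi" using u wiK by blast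
            have "ln u wi = ln y wi" using ln_eq2[OF yX wiX u(1) mem_ln2[OF yX wiX] uw] .
            then have "y \<in> ln u wi" using mem_ln1[OF yX wiX] by simp
            then show ?thesis using u(2) wiL by blast
          qed
        qed
      qed
    qed
  qed
qed

lemma PF_reg: assumes P: PF and Lg: "long3 Ls" shows "regular3 X Ls"
  unfolding regular3_def
proof (intro allI impI)
  fix A z p assume h: "A \<subseteq> X \<and> finite A \<and> card A < 3 \<and> z \<in> hl A \<and> p \<in> X - hl A"
  show "hl (insert p A) = (\<Union>u\<in>ln z p. \<Union>a\<in>hl A. ln u a)"
    using reg_one[OF P Lg, of A z p] reg_sup[of A z p] h by blast
qed

end

context lin begin

lemma AFFD: assumes A: "affine_liner X Ls" and X: "z \<in> X" "x \<in> X" "y \<in> X" and p: "p \<in> ln x y" "p \<notin> ln z x"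
  shows "\<exists>u\<in>ln z y. \<forall>v\<in>ln z y. (u = v \<longleftrightarrow> ln v p \<inter> ln z x = {})"
proof -
  have "p \<in> ln x y - ln z x" using p by simp
  then show ?thesis using bspec[OF bspec[OF bspec[OF bspec[OF A[unfolded affine_liner_def] X(1)] X(2)] X(3)]] by simp
qed

lemma aff_uniq: assumes A: "affine_liner X Ls" and R: "regular3 X Ls" and nc: "ncol oo x y"
  and q: "q \<in> hl {oo,x,y}" "q \<notin> ln oo x" "q \<notin> ln oo y"
  and v: "v1 \<in> ln oo y" "v2 \<in> ln oo y" "ln v1 q \<inter> ln oo x = {}" "ln v2 q \<inter> ln oo x = {}"
  shows "v1 = v2"
proof -
  have X: "oo \<in> X" "x \<in> X" "y \<in> X" using ncol_X[OF nc] by auto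
  have ne: "oo \<noteq> x" "oo \<noteq> y" using ncol_ne[OF nc] by auto
  obtain u w where u: "u \<in> ln oo y" and w: "w \<in> ln oo x" and quw: "q \<in> ln u w"
    using reg_decomp[OF R nc mem_ln1[OF X(1,2)] q(1)] by blast
  have uX: "u \<in> X" using u ln_sub[OF X(1,3)] by blast
  have wX: "w \<in> X" using w ln_sub[OF X(1,2)] by blast
  have uo: "u \<noteq> oo"
  proof
    assume "u = oo"
    then have "q \<in> ln oo w" using quw by simp
    moreover have "ln oo w \<subseteq> ln oo x" using flat_ln_sub[OF flat_line[OF X(1,2)] mem_ln1[OF X(1,2)] w] .
    ultimately show False using q(2) by blast
  qed
  have wo: "w \<noteq> oo"
  proof
    assume "w = oo"
    then have "q \<in> ln u oo" using quw by simp
    moreover have "ln u oo \<subseteq> ln oo y" using flat_ln_sub[OF flat_line[OF X(1,3)] u mem_ln1[OF X(1,3)]] .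
    ultimately show False using q(3) by blast
  qed
  have uw: "u \<noteq> w" using quw u q(3) by auto
  have low: "ln oo w = ln oo x" using ln_eq2[OF X(1,2) mem_ln1[OF X(1,2)] w] wo[symmetric] by simp
  have lou: "ln oo u = ln oo y" using ln_eq2[OF X(1,3) mem_ln1[OF X(1,3)] u] uo[symmetric] by simp
  have q2: "q \<in> ln w u" using quw line_sym[of Ls u w] by simp
  have q3: "q \<notin> ln oo w" using q(2) low by simp
  obtain u0 where "u0 \<in> ln oo u" and u0: "\<forall>v\<in>ln oo u. (u0 = v \<longleftrightarrow> ln v q \<inter> ln oo w = {})"
    using AFFD[OF A X(1) wX uX q2 q3] by blast
  then show ?thesis using v lou low by metis
qed

lemma exist2: assumes A: "affine_liner X Ls" and Lg: "long3 Ls" and nc: "ncol a b p"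
  shows "\<exists>\<Lambda>. \<Lambda> \<in> Ls \<and> p \<in> \<Lambda> \<and> \<Lambda> \<subseteq> hl {a,b,p} - ln a b"
proof -
  have X: "a \<in> X" "b \<in> X" "p \<in> X" using ncol_X[OF nc] by auto
  have ne: "a \<noteq> b" "a \<noteq> p" "b \<noteq> p" using ncol_ne[OF nc] by auto
  have pL: "p \<notin> ln a b" using ncol_out[OF nc] .
  have BP: "ln b p \<in> Ls" using line_in[OF X(2,3) ne(3)] by simp
  obtain q1 q2 q3 where q: "q1 \<in> ln b p" "q2 \<in> ln b p" "q3 \<in> ln b p" "q1 \<noteq> q2" "q1 \<noteq> q3" "q2 \<noteq> q3"
    using Lg BP unfolding long3_def by blast
  obtain y where y: "y \<in> ln b p" "y \<noteq> b" "y \<noteq> p"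
  proof -
    have "\<exists>y\<in>{q1,q2,q3}. y \<noteq> b \<and> y \<noteq> p" using q by auto
    then show ?thesis using that q by blast
  qed
  have yX: "y \<in> X" using y ln_sub[OF X(2,3)] by blast
  have lby: "ln b y = ln b p" using ln_eq2[OF X(2,3) mem_ln1[OF X(2,3)] y(1)] y(2)[symmetric] by simp
  have pby: "p \<in> ln b y" using lby mem_ln2[OF X(2,3)] by simp
  obtain u where u: "u \<in> ln a y" and uu: "\<forall>v\<in>ln a y. (u = v \<longleftrightarrow> ln v p \<inter> ln a b = {})"
    using AFFD[OF A X(1,2) yX pby pL] by blast
  have e: "ln u p \<inter> ln a b = {}" using uu u by blast
  have uX: "u \<in> X" using u ln_sub[OF X(1) yX] by blast
  have up: "u \<noteq> p"
  proof
    assume "u = p"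
    then have pay: "p \<in> ln a y" using u by simp
    have "ln p y = ln a y" using ln_eq2[OF X(1) yX pay mem_ln2[OF X(1) yX] y(3)[symmetric]] .
    moreover have "ln p y = ln b p" using ln_eq2[OF X(2,3) mem_ln2[OF X(2,3)] y(1) y(3)[symmetric]] .
    ultimately have abp: "a \<in> ln b p" using mem_ln1[OF X(1) yX] by simp
    have "ln b a = ln b p" using ln_eq2[OF X(2,3) mem_ln1[OF X(2,3)] abp] ne(1) by simp
    then show False using pL line_sym[of Ls a b] mem_ln2[OF X(2,3)] by simp
  qed
  have yH: "y \<in> hl {a,b,p}" using tri_ln[OF nc tri_mem(2,3)] y(1) by blast
  have uH: "u \<in> hl {a,b,p}" using tri_ln[OF nc tri_mem(1) yH] u by blast
  have "ln u p \<subseteq> hl {a,b,p}" using tri_ln[OF nc uH tri_mem(3)] .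
  then show ?thesis using line_in[OF uX X(3) up] e by blast
qed

lemma uniq2: assumes A: "affine_liner X Ls" and R: "regular3 X Ls" and nc: "ncol a b p"
  and C: "C \<in> Ls" "p \<in> C" "C \<subseteq> hl {a,b,p}" "C \<inter> ln a b = {}"
  and D: "D \<in> Ls" "p \<in> D" "D \<subseteq> hl {a,b,p}" "D \<inter> ln a b = {}"
  shows "C = D"
proof (rule ccontr)
  assume CD: "C \<noteq> D"
  have E: EXC using EXC_reg[OF R] .
  have X: "a \<in> X" "b \<in> X" "p \<in> X" using ncol_X[OF nc] by auto
  have ne: "a \<noteq> b" "a \<noteq> p" "b \<noteq> p" using ncol_ne[OF nc] by auto
  let ?H = "hl {a,b,p}" and ?L = "ln a b"
  have HX: "?H \<subseteq> X" using tri_X[OF nc] .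
  have aL: "a \<in> ?L" "b \<in> ?L" using mem_ln1[OF X(1,2)] mem_ln2[OF X(1,2)] by auto
  have LL: "?L \<in> Ls" using line_in[OF X(1,2) ne(1)] by simp
  obtain x1 where x1: "x1 \<in> C" "x1 \<noteq> p"
  proof -
    obtain s t where "s \<in> C" "t \<in> C" "s \<noteq> t" using L_two[OF C(1)] by blast
    then show ?thesis using that by blast
  qed
  obtain d where d: "d \<in> D" "d \<noteq> p"
  proof -
    obtain s t where "s \<in> D" "t \<in> D" "s \<noteq> t" using L_two[OF D(1)] by blast
    then show ?thesis using that by blast
  qed
  have x1X: "x1 \<in> X" and dX: "d \<in> X" using x1 d C(3) D(3) HX by auto
  have dC: "d \<notin> C" using two_lines[OF C(1) D(1) C(2) _ D(2) d(1)] d(2) CD by blast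
  have Ceq: "ln p x1 = C" using line_eq[OF C(1,2) x1(1)] x1(2) by simp
  have Deq: "ln p d = D" using line_eq[OF D(1,2) d(1)] d(2) by simp
  have aC: "a \<notin> C" using C(4) aL by blast
  have nc2: "ncol p x1 a" using ncol_I[OF X(3) x1X X(1) x1(2)[symmetric]] aC Ceq by simp
  have x1H: "x1 \<in> ?H" using x1 C(3) by blast
  have Heq: "hl {p,x1,a} = ?H" using fullx[OF E nc nc2 tri_mem(3) x1H tri_mem(1)] .
  have dH: "d \<in> hl {p,x1,a}" using Heq d(1) D(3) by blast
  obtain u0 x0 where u0: "u0 \<in> ln p a" and x0: "x0 \<in> ln p x1" and dN: "d \<in> ln u0 x0"
    using reg_decomp[OF R nc2 mem_ln1[OF X(3) x1X] dH] by blast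
  have x0C: "x0 \<in> C" using x0 Ceq by simp
  have u0X: "u0 \<in> X" using u0 ln_sub[OF X(3,1)] by blast
  have x0X: "x0 \<in> X" using x0C C(3) HX by blast
  have u0p: "u0 \<noteq> p"
  proof
    assume "u0 = p"
    then have "d \<in> ln p x0" using dN by simp
    moreover have "ln p x0 \<subseteq> C" using flat_ln_sub[OF flat_L[OF C(1)] C(2) x0C] .
    ultimately show False using dC by blast
  qed
  have pa: "ln p a = ln a p" using line_sym by metis
  have x0p: "x0 \<noteq> p"
  proof
    assume "x0 = p"
    then have "d \<in> ln u0 p" using dN by simp
    moreover have "ln u0 p = ln p a" using ln_eq2[OF X(3,1) u0 mem_ln1[OF X(3,1)] u0p] .
    ultimately have "d \<in> ln p a" by simp
    then have "ln p d = ln p a" using ln_eq2[OF X(3,1) mem_ln1[OF X(3,1)]] d(2) by simp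
    then have "a \<in> D" using Deq mem_ln2[OF X(3,1)] by simp
    then show False using D(4) aL by blast
  qed
  have u0x0: "u0 \<noteq> x0" using dN x0C dC by auto
  have x0d: "x0 \<noteq> d" using x0C dC by blast
  have NL: "ln u0 x0 \<in> Ls" using line_in[OF u0X x0X u0x0] by simp
  have x0N: "x0 \<in> ln u0 x0" and u0N: "u0 \<in> ln u0 x0" using mem_ln1[OF u0X x0X] mem_ln2[OF u0X x0X] by auto
  have lx0p: "ln x0 p = C" using line_eq[OF C(1) x0C C(2) x0p] .
  have ldp: "ln d p = D" using line_eq[OF D(1) d(1) D(2) d(2)] .
  have x0L: "x0 \<notin> ?L" using x0C C(4) by blast
  show False
  proof (cases "ln u0 x0 \<inter> ?L = {}")
    case False
    then obtain oo where oo: "oo \<in> ln u0 x0" "oo \<in> ?L" by blast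
    obtain xx where xx: "xx \<in> ?L" "xx \<noteq> oo"
    proof (cases "oo = a")
      case True then show ?thesis using that[of b] aL ne(1) by blast
    next
      case False then show ?thesis using that[of a] aL by blast
    qed
    have oX: "oo \<in> X" and xxX: "xx \<in> X" using oo(2) xx(1) ln_sub[OF X(1,2)] by auto
    have lox: "ln oo xx = ?L" using line_eq[OF LL oo(2) xx(1) xx(2)[symmetric]] .
    have ox0: "oo \<noteq> x0" using oo(2) x0L by blast
    have lon: "ln oo x0 = ln u0 x0" using line_eq[OF NL oo(1) x0N ox0] .
    have nc3: "ncol oo xx x0" using ncol_I[OF oX xxX x0X xx(2)[symmetric]] lox x0L by simp
    have oH: "oo \<in> ?H" and xxH: "xx \<in> ?H" and x0H: "x0 \<in> ?H" using oo(2) xx(1) x0C C(3) tri_ln[OF nc tri_mem(1,2)] by auto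
    have H3: "hl {oo,xx,x0} = ?H" using fullx[OF E nc nc3 oH xxH x0H] .
    have pN: "p \<notin> ln u0 x0"
    proof
      assume "p \<in> ln u0 x0"
      then have "ln u0 x0 = C" using two_lines[OF NL C(1) x0N _ x0C C(2) x0p] by blast
      then show False using oo C(4) by blast
    qed
    have "x0 = d"
      by (rule aff_uniq[OF A R nc3, of p x0 d]) (use H3 tri_mem(3) lox lon pN ncol_out[OF nc] mem_ln2[OF oX x0X] x0N dN lx0p ldp C(4) D(4) in auto)
    then show False using x0d by simp
  next
    case True
    have x0ap: "x0 \<notin> ln a p"
    proof
      assume "x0 \<in> ln a p"
      then have "ln p x0 = ln p a" using ln_eq2[OF X(3,1) mem_ln1[OF X(3,1)]] pa x0p[symmetric] by simp
      moreover have "ln p x0 = C" using line_eq[OF C(1,2) x0C] x0p[symmetric] by simp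
      ultimately show False using aC mem_ln2[OF X(3,1)] by simp
    qed
    have x0H: "x0 \<in> ?H" using x0C C(3) by blast
    have "p = u0"
      by (rule aff_uniq[OF A R nc x0H x0L x0ap]) (use mem_ln2[OF X(1,3)] u0 pa lx0p C(4) True line_sym[of Ls x0 p] line_sym[of Ls u0 x0] in auto)
    then show False using u0p by simp
  qed
qed

lemma T3_2: assumes A: "affine_liner X Ls" and R: "regular3 X Ls" and Lg: "long3 Ls" shows T3
  unfolding T3_def
proof (intro allI impI)
  fix a b c assume nc: "ncol a b c"
  obtain \<Lambda> where \<Lambda>: "\<Lambda> \<in> Ls" "c \<in> \<Lambda>" "\<Lambda> \<subseteq> hl {a,b,c} - ln a b" using exist2[OF A Lg nc] by blast
  show "\<exists>!\<Lambda>. \<Lambda> \<in> Ls \<and> c \<in> \<Lambda> \<and> \<Lambda> \<subseteq> hl {a,b,c} - ln a b"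
  proof (rule ex1I[of _ \<Lambda>])
    show "\<Lambda> \<in> Ls \<and> c \<in> \<Lambda> \<and> \<Lambda> \<subseteq> hl {a,b,c} - ln a b" using \<Lambda> by simp
  next
    fix M assume M: "M \<in> Ls \<and> c \<in> M \<and> M \<subseteq> hl {a,b,c} - ln a b"
    have m1: "M \<subseteq> hl {a,b,c}" "M \<inter> ln a b = {}" using M by auto
    have l1: "\<Lambda> \<subseteq> hl {a,b,c}" "\<Lambda> \<inter> ln a b = {}" using \<Lambda> by auto
    show "M = \<Lambda>" using uniq2[OF A R nc _ _ m1 \<Lambda>(1,2) l1] M by blast
  qed
qed

end

context lin begin

lemma small_hull: assumes B: "B \<subseteq> X" "finite B" "card B < 3" and nc: "ncol a b c"
  and s: "{a,b,c} \<subseteq> hl B" shows False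
proof -
  have X: "a \<in> X" "b \<in> X" "c \<in> X" using ncol_X[OF nc] by auto
  have ne: "a \<noteq> b" "a \<noteq> c" "b \<noteq> c" using ncol_ne[OF nc] by auto
  have "B = {} \<or> (\<exists>u. B = {u}) \<or> (\<exists>u v. u \<noteq> v \<and> B = {u,v})" using card_lt3[OF B(2,3)] .
  then show False
  proof (elim disjE exE conjE)
    assume "B = {}" then show False using s hull_empty by simp
  next
    fix u assume "B = {u}"
    then have "hl B = {u}" using hull_single B(1) by simp
    then show False using s ne by auto
  next
    fix u v assume uv: "u \<noteq> v" "B = {u,v}"
    have uX: "u \<in> X" "v \<in> X" using B(1) uv by auto
    have h: "hl B = ln u v" using hull_pair[OF uX] uv by simp
    have "ln a b = ln u v" using line_eq[OF line_in(1)[OF uX uv(1)], of a b] s h ne by auto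
    then show False using s h ncol_out[OF nc] by auto
  qed
qed

lemma rank_tri: assumes nc: "ncol a b c" shows "rank X Ls (hl {a,b,c}) = 3"
proof -
  have s: "{a,b,c} \<subseteq> X" using tri_sub[OF nc] .
  have ne: "a \<noteq> b" "a \<noteq> c" "b \<noteq> c" using ncol_ne[OF nc] by auto
  have c3: "card {a,b,c} = 3" using ne by simp
  have ex: "\<exists>B. B \<subseteq> X \<and> finite B \<and> hl {a,b,c} \<subseteq> hl B" using s by blast
  have "(LEAST n. \<exists>B. B \<subseteq> X \<and> finite B \<and> card B = n \<and> hl {a,b,c} \<subseteq> hl B) = 3"
  proof (rule Least_equality)
    show "\<exists>B. B \<subseteq> X \<and> finite B \<and> card B = 3 \<and> hl {a,b,c} \<subseteq> hl B" using s c3 by blast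
  next
    fix m assume "\<exists>B. B \<subseteq> X \<and> finite B \<and> card B = m \<and> hl {a,b,c} \<subseteq> hl B"
    then obtain B where B: "B \<subseteq> X" "finite B" "card B = m" "hl {a,b,c} \<subseteq> hl B" by blast
    show "3 \<le> m"
    proof (rule ccontr)
      assume "\<not> 3 \<le> m"
      then have "card B < 3" using B(3) by simp
      moreover have "{a,b,c} \<subseteq> hl B" using B(4) hull_sup[of "{a,b,c}"] by blast
      ultimately show False using small_hull[OF B(1,2) _ nc] by blast
    qed
  qed
  then show ?thesis unfolding rank_def using ex by (simp add: numeral_eq_enat)
qed

lemma plane_eq: assumes E: EXC and P: "plane X Ls P" and L: "L \<in> Ls" "L \<subseteq> P" and x: "x \<in> P" "x \<notin> L"
  shows "P = hl (L \<union> {x})"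
proof -
  have fP: "flat X Ls P" and rP: "rank X Ls P = 3" using P unfolding plane_def by auto
  have PX: "P \<subseteq> X" using fP unfolding flat_def by simp
  have cond: "\<exists>B. B \<subseteq> X \<and> finite B \<and> P \<subseteq> hl B"
  proof (rule ccontr)
    assume "\<not> ?thesis"
    then have "rank X Ls P = \<infinity>" unfolding rank_def by simp
    then show False using rP by simp
  qed
  then have "enat (LEAST n. \<exists>B. B \<subseteq> X \<and> finite B \<and> card B = n \<and> P \<subseteq> hl B) = 3"
    using rP unfolding rank_def by simp
  then have l3: "(LEAST n. \<exists>B. B \<subseteq> X \<and> finite B \<and> card B = n \<and> P \<subseteq> hl B) = 3"
    by (simp add: numeral_eq_enat)
  have "\<exists>n B. B \<subseteq> X \<and> finite B \<and> card B = n \<and> P \<subseteq> hl B" using cond by blast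
  then have "\<exists>B. B \<subseteq> X \<and> finite B \<and> card B = (LEAST n. \<exists>B. B \<subseteq> X \<and> finite B \<and> card B = n \<and> P \<subseteq> hl B) \<and> P \<subseteq> hl B"
    by (rule LeastI_ex)
  then obtain B where B: "B \<subseteq> X" "finite B" "card B = 3" "P \<subseteq> hl B" using l3 by auto
  obtain b1 b2 b3 where b: "B = {b1,b2,b3}" "b1 \<noteq> b2" "b2 \<noteq> b3" "b1 \<noteq> b3"
    using B(3) card_3_iff by metis
  have bX: "b1 \<in> X" "b2 \<in> X" "b3 \<in> X" using B(1) b(1) by auto
  obtain l1 l2 where l: "l1 \<in> L" "l2 \<in> L" "l1 \<noteq> l2" using L_two[OF L(1)] by blast
  have Leq: "ln l1 l2 = L" using line_eq[OF L(1) l] .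
  have lX: "l1 \<in> X" "l2 \<in> X" using l L_sub[OF L(1)] by auto
  have xX: "x \<in> X" using x PX by blast
  have ncl: "ncol l1 l2 x" using ncol_I[OF lX xX l(3)] Leq x(2) by simp
  have ncb: "ncol b1 b2 b3"
  proof (rule ncol_I[OF bX b(2)], rule notI)
    assume "b3 \<in> ln b1 b2"
    then have "B \<subseteq> ln b1 b2" using b(1) mem_ln1[OF bX(1,2)] mem_ln2[OF bX(1,2)] by auto
    then have "hl B \<subseteq> ln b1 b2" using hull_min[OF flat_line[OF bX(1,2)]] by blast
    then have PL: "P \<subseteq> ln b1 b2" using B(4) by blast
    have "L = ln b1 b2" using two_lines[OF L(1) line_in(1)[OF bX(1,2) b(2)] l(1,2) _ _ l(3)] PL L(2) l by blast
    then show False using x PL by blast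
  qed
  have Hb: "hl B = hl {b1,b2,b3}" using b(1) by simp
  have inP: "l1 \<in> P" "l2 \<in> P" "x \<in> P" using L(2) l x(1) by auto
  have inB: "l1 \<in> hl {b1,b2,b3}" "l2 \<in> hl {b1,b2,b3}" "x \<in> hl {b1,b2,b3}" using inP B(4) Hb by auto
  have "hl {l1,l2,x} = hl {b1,b2,b3}"
    using fullx[OF E ncb ncl inB] .
  moreover have "{l1,l2,x} \<subseteq> P" using inP by simp
  then have "hl {l1,l2,x} \<subseteq> P" by (rule hull_min[OF fP])
  ultimately have "P = hl {l1,l2,x}" using B(4) Hb by blast
  then show ?thesis using hull_line_pt[OF lX xX] Leq by simp
qed

definition P3 where "P3 \<longleftrightarrow> (\<forall>L\<in>Ls. \<forall>x\<in>X - L. \<exists>!\<Lambda>. \<Lambda> \<in> Ls \<and> x \<in> \<Lambda> \<and> \<Lambda> \<subseteq> flat_hull X Ls (L \<union> {x}) - L)"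

lemma P3_T3: "P3 \<Longrightarrow> T3"
  unfolding T3_def
proof (intro allI impI)
  fix a b c assume P: P3 and nc: "ncol a b c"
  have X: "a \<in> X" "b \<in> X" "c \<in> X" using ncol_X[OF nc] by auto
  have LL: "ln a b \<in> Ls" using line_in[OF X(1,2)] ncol_ne[OF nc] by simp
  have "c \<in> X - ln a b" using X(3) ncol_out[OF nc] by simp
  then have "\<exists>!\<Lambda>. \<Lambda> \<in> Ls \<and> c \<in> \<Lambda> \<and> \<Lambda> \<subseteq> hl (ln a b \<union> {c}) - ln a b"
    using bspec[OF bspec[OF P[unfolded P3_def] LL]] by blast
  then show "\<exists>!\<Lambda>. \<Lambda> \<in> Ls \<and> c \<in> \<Lambda> \<and> \<Lambda> \<subseteq> hl {a,b,c} - ln a b"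
    using hull_line_pt[OF X] by simp
qed

lemma T3_P3: assumes T: T3 shows P3
  unfolding P3_def
proof (intro ballI)
  fix L x assume L: "L \<in> Ls" and x: "x \<in> X - L"
  obtain l1 l2 where l: "l1 \<in> L" "l2 \<in> L" "l1 \<noteq> l2" using L_two[OF L] by blast
  have Leq: "ln l1 l2 = L" using line_eq[OF L l] .
  have lX: "l1 \<in> X" "l2 \<in> X" using l L_sub[OF L] by auto
  have nc: "ncol l1 l2 x" using ncol_I[OF lX _ l(3)] Leq x by simp
  have "\<exists>!\<Lambda>. \<Lambda> \<in> Ls \<and> x \<in> \<Lambda> \<and> \<Lambda> \<subseteq> hl {l1,l2,x} - ln l1 l2"
    using T[unfolded T3_def, rule_format, OF nc] .
  then show "\<exists>!\<Lambda>. \<Lambda> \<in> Ls \<and> x \<in> \<Lambda> \<and> \<Lambda> \<subseteq> hl (L \<union> {x}) - L"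
    using hull_line_pt[OF lX, of x] x Leq by simp
qed

lemma PL_P3: assumes PL: "playfair X Ls" shows P3
  unfolding P3_def
proof (intro ballI)
  fix L x assume L: "L \<in> Ls" and x: "x \<in> X - L"
  obtain l1 l2 where l: "l1 \<in> L" "l2 \<in> L" "l1 \<noteq> l2" using L_two[OF L] by blast
  have Leq: "ln l1 l2 = L" using line_eq[OF L l] .
  have lX: "l1 \<in> X" "l2 \<in> X" using l L_sub[OF L] by auto
  have nc: "ncol l1 l2 x" using ncol_I[OF lX _ l(3)] Leq x by simp
  have He: "hl (L \<union> {x}) = hl {l1,l2,x}" using hull_line_pt[OF lX, of x] x Leq by simp
  have pl: "plane X Ls (hl (L \<union> {x}))" unfolding plane_def He using tri_flat[OF nc] rank_tri[OF nc] by simp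
  have sub: "L \<subseteq> hl (L \<union> {x})" "x \<in> hl (L \<union> {x}) - L" using hull_sup[of "L \<union> {x}"] x by auto
  show "\<exists>!\<Lambda>. \<Lambda> \<in> Ls \<and> x \<in> \<Lambda> \<and> \<Lambda> \<subseteq> hl (L \<union> {x}) - L"
    using PL[unfolded playfair_def, rule_format, of "hl (L \<union> {x})" L x] pl L sub by blast
qed

lemma P3_PL: assumes P: P3 shows "playfair X Ls"
  unfolding playfair_def
proof (intro allI impI)
  fix Pl L x assume h: "plane X Ls Pl \<and> L \<in> Ls \<and> L \<subseteq> Pl \<and> x \<in> Pl - L"
  have E: EXC using EXC_T3[OF P3_T3[OF P]] .
  have eq: "Pl = hl (L \<union> {x})" using plane_eq[OF E] h by blast
  have "x \<in> X" using h unfolding plane_def flat_def by blast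
  then show "\<exists>!\<Lambda>. \<Lambda> \<in> Ls \<and> x \<in> \<Lambda> \<and> \<Lambda> \<subseteq> Pl - L"
    using bspec[OF bspec[OF P[unfolded P3_def]]] h eq by blast
qed

lemma main: assumes big: "infinite X \<or> card X > 2"
  shows "(playfair X Ls \<longleftrightarrow> affine_liner X Ls \<and> regular3 X Ls \<and> long3 Ls) \<and>
    (affine_liner X Ls \<and> regular3 X Ls \<and> long3 Ls \<longleftrightarrow> P3)"
proof -
  have A: "P3 \<Longrightarrow> affine_liner X Ls \<and> regular3 X Ls \<and> long3 Ls"
  proof -
    assume P: P3
    have pf: PF using PF_T3[OF P3_T3[OF P]] .
    have lg: "long3 Ls" using PF_long[OF pf big] .
    show ?thesis using PF_affine[OF pf] PF_reg[OF pf lg] lg by simp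
  qed
  have B: "affine_liner X Ls \<and> regular3 X Ls \<and> long3 Ls \<Longrightarrow> P3"
    using T3_P3 T3_2 by blast
  show ?thesis using A B PL_P3 P3_PL by blast
qed

end

theorem theorem3p7p2:
  fixes X :: "'a set" and Ls :: "'a set set"
  assumes "liner X Ls"
    and "infinite X \<or> card X > 2"
  shows "(playfair X Ls \<longleftrightarrow> affine_liner X Ls \<and> regular3 X Ls \<and> long3 Ls)
       \<and> (affine_liner X Ls \<and> regular3 X Ls \<and> long3 Ls \<longleftrightarrow>
          (\<forall>L\<in>Ls. \<forall>x\<in>X - L. \<exists>!\<Lambda>. \<Lambda> \<in> Ls \<and> x \<in> \<Lambda> \<and>
              \<Lambda> \<subseteq> flat_hull X Ls (L \<union> {x}) - L))"
proof -
  interpret lin X Ls by (rule lin.intro) (rule assms(1))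
  show ?thesis using main[OF assms(2)] unfolding P3_def .
qed

end
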